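(* Let $n\ge 2$, $N=\{1,\dots,n\}$, for each $i\in N$ let $A_i$ be a nonempty finite set, $A=\prod_{i\in N}A_i$, $u_i:A\to\mathbb{R}$, $u(a)=(u_i(a))_{i\in N}$, $V=\operatorname{co}\{u(a):a\in A\}$ and $F^*=\prod_{i\in N}\left[\min_{a\in A}u_i(a),\ \max_{a\in A}u_i(a)\right]$. Then $V\neq F^*$ if and only if there exist two points $u,\tilde u\in V$ with $u\neq\tilde u$ satisfying: (1) there exists $\lambda\in\mathbb{R}^n\setminus\{\mathbf 0\}$ such that for all $\bar u\in\mathbb{R}^n$: $\bar u\in\arg\max_{u'\in V}\lambda\cdot u'$ if and only if $\bar u\in\{tu+(1-t)\tilde u: t\in[0,1]\}$; (2) there exist at least two players $i\in N$ such that $u_i\neq\tilde u_i$.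
   Context: $\operatorname{co}$ denotes convex hull. *)

theory Defs
  imports "HOL-Analysis.Analysis"
begin

text \<open>Players are the elements of a finite type 'n (so N has CARD('n) elements);
  player i has action set A i; action profiles are the elements of
  PiE UNIV A; payoff of player i at profile a is u i a.\<close>

definition profiles :: "('n \<Rightarrow> 'b set) \<Rightarrow> ('n \<Rightarrow> 'b) set" where
  "profiles A = PiE UNIV A"

definition payoff_vec :: "('n::finite \<Rightarrow> ('n \<Rightarrow> 'b) \<Rightarrow> real) \<Rightarrow> ('n \<Rightarrow> 'b) \<Rightarrow> real ^ 'n" where
  "payoff_vec u a = (\<chi> i. u i a)"

definition feasible_set :: "('n::finite \<Rightarrow> 'b set) \<Rightarrow> ('n \<Rightarrow> ('n \<Rightarrow> 'b) \<Rightarrow> real) \<Rightarrow> (real ^ 'n) set" where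
  "feasible_set A u = convex hull (payoff_vec u ` profiles A)"

definition Fstar :: "('n::finite \<Rightarrow> 'b set) \<Rightarrow> ('n \<Rightarrow> ('n \<Rightarrow> 'b) \<Rightarrow> real) \<Rightarrow> (real ^ 'n) set" where
  "Fstar A u = {x. \<forall>i. Min (u i ` profiles A) \<le> x $ i \<and> x $ i \<le> Max (u i ` profiles A)}"

end

theory Submission
  imports Defs
begin

lemma proper_face_step:
  fixes K :: "'a::euclidean_space set"
  assumes K: "polytope K" and p: "p extreme_point_of K" and q: "q \<in> K" and mq: "m \<bullet> q > m \<bullet> p"
    and dim: "aff_dim K \<ge> 2"
  obtains F q' where "F face_of K" "F \<noteq> K" "p \<in> F" "q' \<in> F" "m \<bullet> q' > m \<bullet> p"
proof -
  obtain S where S: "finite S" "K = convex hull S" using K polytope_def by blast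
  have pS: "p \<in> S" using p S extreme_point_of_convex_hull by blast
  have pK: "p \<in> K" using p extreme_point_of_def by blast
  have poly: "polyhedron K" using K polytope_imp_polyhedron by blast
  have "{p} face_of K" using p face_of_singleton by blast
  then have "{p} exposed_face_of K" using exposed_face_of_polyhedron[OF poly] by blast
  then obtain a b where ab: "K \<subseteq> {x. a \<bullet> x \<le> b}" "{p} = K \<inter> {x. a \<bullet> x = b}"
    unfolding exposed_face_of_def by blast
  have ap: "a \<bullet> p = b" using ab by blast
  have alt: "a \<bullet> x < b" if "x \<in> K" "x \<noteq> p" for x
    using ab that by force
  define T where "T = {x\<in>S. m \<bullet> x > m \<bullet> p}"
  have Tne: "T \<noteq> {}"
  proof
    assume "T = {}"
    then have "S \<subseteq> {x. m \<bullet> x \<le> m \<bullet> p}" unfolding T_def by force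
    then have "K \<subseteq> {x. m \<bullet> x \<le> m \<bullet> p}" unfolding S(2) by (intro hull_minimal) (simp_all add: convex_halfspace_le)
    with q mq show False by force
  qed
  have fT: "finite T" using S T_def by simp
  define \<rho> where "\<rho> x = (b - a \<bullet> x) / (m \<bullet> x - m \<bullet> p)" for x
  define t where "t = Min (\<rho> ` T)"
  have "t \<in> \<rho> ` T" unfolding t_def using fT Tne by (intro Min_in) auto
  then obtain x0 where x0: "x0 \<in> T" "\<rho> x0 = t" by force
  have tle: "t \<le> \<rho> x" if "x \<in> T" for x using that fT t_def by simp
  have x0K: "x0 \<in> K" using x0 T_def by (simp add: S(2) hull_inc)
  have x0p: "x0 \<noteq> p" using x0 T_def by auto
  have tpos: "t > 0"
    using x0 alt[OF x0K x0p] T_def \<rho>_def by auto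
  define k where "k = a + t *\<^sub>R m"
  have kS: "k \<bullet> y \<le> k \<bullet> p" if "y \<in> S" for y
  proof (cases "y \<in> T")
    case True
    then have d: "m \<bullet> y - m \<bullet> p > 0" using T_def by auto
    have "t \<le> (b - a \<bullet> y) / (m \<bullet> y - m \<bullet> p)" using tle[OF True] \<rho>_def by simp
    then have "t * (m \<bullet> y - m \<bullet> p) \<le> b - a \<bullet> y" using d by (simp add: pos_le_divide_eq)
    then show ?thesis using ap by (simp add: k_def inner_add_left algebra_simps)
  next
    case False
    then have "m \<bullet> y \<le> m \<bullet> p" using that T_def by auto
    moreover have "y \<in> K" using that by (simp add: S(2) hull_inc)
    then have "a \<bullet> y \<le> b" using ab by blast
    ultimately show ?thesis using ap tpos
      by (simp add: k_def inner_add_left) (smt (verit) mult_left_mono)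
  qed
  have kK: "K \<subseteq> {y. k \<bullet> y \<le> k \<bullet> p}"
    unfolding S(2) by (intro hull_minimal) (use kS in \<open>auto simp add: convex_halfspace_le\<close>)
  have kx0: "k \<bullet> x0 = k \<bullet> p"
  proof -
    have d: "m \<bullet> x0 - m \<bullet> p > 0" using x0 T_def by auto
    have "t * (m \<bullet> x0 - m \<bullet> p) = b - a \<bullet> x0" using x0 \<rho>_def d by auto
    then show ?thesis using ap by (simp add: k_def inner_add_left algebra_simps)
  qed
  define F where "F = K \<inter> {y. k \<bullet> y = k \<bullet> p}"
  have Fface: "F face_of K"
    unfolding F_def using kK K polytope_imp_convex face_of_Int_supporting_hyperplane_le by blast
  show ?thesis
  proof (cases "F = K")
    case False
    moreover have "p \<in> F" "x0 \<in> F" using pK x0K kx0 F_def by auto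
    ultimately show ?thesis using that Fface x0 T_def by blast
  next
    case True
    have allm: "m \<bullet> y > m \<bullet> p" if "y \<in> K" "y \<noteq> p" for y
    proof -
      have "k \<bullet> y = k \<bullet> p" using True that F_def by blast
      then have "t * (m \<bullet> y - m \<bullet> p) = b - a \<bullet> y" using ap by (simp add: k_def inner_add_left algebra_simps)
      moreover have "b - a \<bullet> y > 0" using alt that by auto
      ultimately show ?thesis using tpos by (smt (verit) mult_nonneg_nonpos)
    qed
    have "{p} \<noteq> K" using q mq by auto
    then obtain G where G: "G facet_of K" "{p} \<subseteq> G"
      using face_of_polyhedron_subset_facet[OF poly \<open>{p} face_of K\<close>] by blast
    have "aff_dim G = aff_dim K - 1" using G facet_of_def by blast
    then have "G \<noteq> {p}" "G \<noteq> K" using dim aff_dim_sing by auto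
    then obtain y where "y \<in> G" "y \<noteq> p" using G by blast
    moreover have "G \<subseteq> K" using G facet_of_imp_subset by blast
    ultimately show ?thesis using that G allm facet_of_imp_face_of \<open>G \<noteq> K\<close> by blast
  qed
qed

lemma edge_exists:
  fixes K :: "'a::euclidean_space set"
  assumes "polytope K" "p extreme_point_of K" "q \<in> K" "m \<bullet> q > m \<bullet> p"
  shows "\<exists>r. closed_segment p r face_of K \<and> m \<bullet> r > m \<bullet> p"
  using assms
proof (induct "nat (aff_dim K)" arbitrary: K q rule: less_induct)
  case less
  show ?case
  proof (cases "aff_dim K \<le> 1")
    case True
    have "K \<noteq> {}" using less by auto
    then obtain x y where K: "K = closed_segment x y"
      using compact_convex_collinear_segment[of K] less(2) polytope_imp_compact polytope_imp_convex
        collinear_aff_dim True by metis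
    then have "p = x \<or> p = y" using less(3) extreme_point_of_segment by metis
    then obtain r where Kr: "K = closed_segment p r"
      using K closed_segment_commute by metis
    obtain w where w: "0 \<le> w" "w \<le> 1" "q = (1 - w) *\<^sub>R p + w *\<^sub>R r"
      using less(4) Kr closed_segment_def by (smt (verit) mem_Collect_eq)
    have "m \<bullet> q - m \<bullet> p = w * (m \<bullet> r - m \<bullet> p)"
      unfolding w(3) by (simp add: inner_add_right algebra_simps)
    then have "m \<bullet> r > m \<bullet> p" using less(5) w
      by (smt (verit) mult_nonneg_nonpos)
    moreover have "K face_of K" using less(2) polytope_imp_convex face_of_refl by blast
    ultimately show ?thesis using Kr by auto
  next
    case False
    then obtain F q' where F: "F face_of K" "F \<noteq> K" "p \<in> F" "q' \<in> F" "m \<bullet> q' > m \<bullet> p"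
      using proper_face_step[OF less(2,3,4,5)] by auto
    have "aff_dim F < aff_dim K" using face_of_aff_dim_lt F less(2) polytope_imp_convex by blast
    moreover have "aff_dim F \<ge> 0" by (metis F(3) aff_dim_negative_iff empty_iff not_less)
    ultimately have lt: "nat (aff_dim F) < nat (aff_dim K)" by simp
    have "polytope F" using F less(2) face_of_polytope_polytope by blast
    moreover have "p extreme_point_of F" using F less(3) extreme_point_of_face by blast
    ultimately obtain r where "closed_segment p r face_of F" "m \<bullet> r > m \<bullet> p"
      using less(1)[OF lt _ _ F(4,5)] by blast
    then show ?thesis using F face_of_trans by blast
  qed
qed

lemma segment_eq:
  fixes p r :: "'a::real_vector"
  shows "closed_segment p r = {t *\<^sub>R p + (1 - t) *\<^sub>R r | t. t \<in> {0..1}}"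
  by (subst closed_segment_commute) (auto simp: closed_segment_def add.commute)

lemma two_diff:
  assumes "card X \<ge> 2"
  obtains i j where "i \<in> X" "j \<in> X" "i \<noteq> j"
proof -
  have "X \<noteq> {}" using assms by auto
  then obtain i where i: "i \<in> X" by blast
  have "card X \<noteq> 1" using assms by simp
  then have "X \<noteq> {i}" by auto
  then obtain j where "j \<in> X" "j \<noteq> i" using i by blast
  then show ?thesis using that i by blast
qed

lemma no_diag_edge:
  fixes V :: "(real ^ 'n) set"
  assumes mix: "\<And>x y i. x \<in> V \<Longrightarrow> y \<in> V \<Longrightarrow> (\<chi> k. if k = i then y $ k else x $ k) \<in> V"
    and vV: "v \<in> V" and wV: "w \<in> V"
    and eq: "\<forall>z :: real ^ 'n.
             (z \<in> V \<and> (\<forall>y \<in> V. l \<bullet> y \<le> l \<bullet> z))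
             \<longleftrightarrow> z \<in> {t *\<^sub>R v + (1 - t) *\<^sub>R w | t. t \<in> {0..1}}"
    and c2: "card {i. v $ i \<noteq> w $ i} \<ge> 2"
  shows False
proof -
  obtain i j where "i \<in> {i. v $ i \<noteq> w $ i}" "j \<in> {i. v $ i \<noteq> w $ i}" "i \<noteq> j"
    by (rule two_diff[OF c2])
  then have ij: "v $ i \<noteq> w $ i" "v $ j \<noteq> w $ j" "i \<noteq> j" by simp_all
  have "v \<in> {t *\<^sub>R v + (1 - t) *\<^sub>R w | t. t \<in> {0..1}}"
    by (rule CollectI, rule exI[of _ 1]) auto
  then have vmax: "\<forall>y \<in> V. l \<bullet> y \<le> l \<bullet> v" using eq by blast
  have "w \<in> {t *\<^sub>R v + (1 - t) *\<^sub>R w | t. t \<in> {0..1}}"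
    by (rule CollectI, rule exI[of _ 0]) auto
  then have wmax: "\<forall>y \<in> V. l \<bullet> y \<le> l \<bullet> w" using eq by blast
  define v' where "v' = (\<chi> k. if k = i then w $ k else v $ k)"
  define w' where "w' = (\<chi> k. if k = i then v $ k else w $ k)"
  have v'V: "v' \<in> V" using mix vV wV v'_def by blast
  have w'V: "w' \<in> V" using mix vV wV w'_def by blast
  have sum: "l \<bullet> v' + l \<bullet> w' = l \<bullet> v + l \<bullet> w"
    unfolding inner_vec_def sum.distrib[symmetric]
    by (rule sum.cong) (auto simp: v'_def w'_def)
  have "l \<bullet> v = l \<bullet> w" using vmax wmax vV wV by force
  moreover have "l \<bullet> v' \<le> l \<bullet> v" using vmax v'V by blast
  moreover have "l \<bullet> w' \<le> l \<bullet> w" using wmax w'V by blast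
  ultimately have "l \<bullet> v' = l \<bullet> v" using sum by linarith
  then have "\<forall>y \<in> V. l \<bullet> y \<le> l \<bullet> v'" using vmax by simp
  then have "v' \<in> {t *\<^sub>R v + (1 - t) *\<^sub>R w | t. t \<in> {0..1}}" using eq v'V by blast
  then obtain t where t: "v' = t *\<^sub>R v + (1 - t) *\<^sub>R w" by blast
  have "v $ j = t * v $ j + (1 - t) * w $ j"
    using arg_cong[OF t, of "\<lambda>x. x $ j"] ij by (simp add: v'_def)
  then have "(1 - t) * (v $ j - w $ j) = 0" by (simp add: algebra_simps)
  then have t1: "t = 1" using ij by simp
  have "w $ i = t * v $ i + (1 - t) * w $ i"
    using arg_cong[OF t, of "\<lambda>x. x $ i"] by (simp add: v'_def)
  then show False using t1 ij by simp
qed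

lemma edge_rhs:
  fixes V :: "(real ^ 'n) set"
  assumes poly: "polytope V" and face: "closed_segment p r face_of V" and pr: "p \<noteq> r"
    and c2: "card {i. p $ i \<noteq> r $ i} \<ge> 2"
  shows "\<exists>v \<in> V. \<exists>w \<in> V. v \<noteq> w \<and>
       (\<exists>l :: real ^ 'n. l \<noteq> 0 \<and>
          (\<forall>z :: real ^ 'n.
             (z \<in> V \<and> (\<forall>y \<in> V. l \<bullet> y \<le> l \<bullet> z))
             \<longleftrightarrow> z \<in> {t *\<^sub>R v + (1 - t) *\<^sub>R w | t. t \<in> {0..1}})) \<and>
       card {i. v $ i \<noteq> w $ i} \<ge> 2"
proof -
  let ?E = "closed_segment p r"
  have EV: "?E \<subseteq> V" using face face_of_imp_subset by blast
  have pV: "p \<in> V" "r \<in> V" using EV by auto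
  have "?E exposed_face_of V"
    using face exposed_face_of_polyhedron poly polytope_imp_polyhedron by blast
  then obtain a b where ab: "V \<subseteq> {x. a \<bullet> x \<le> b}" "?E = V \<inter> {x. a \<bullet> x = b}"
    unfolding exposed_face_of_def by blast
  obtain l where l: "l \<noteq> 0" "\<forall>z. (z \<in> V \<and> (\<forall>y \<in> V. l \<bullet> y \<le> l \<bullet> z)) \<longleftrightarrow> z \<in> ?E"
  proof (cases "a = 0")
    case False
    have "a \<bullet> p = b" using ab by auto
    have "(z \<in> V \<and> (\<forall>y \<in> V. a \<bullet> y \<le> a \<bullet> z)) \<longleftrightarrow> z \<in> ?E" for z
    proof
      assume z: "z \<in> V \<and> (\<forall>y \<in> V. a \<bullet> y \<le> a \<bullet> z)"
      then have "a \<bullet> p \<le> a \<bullet> z" "a \<bullet> z \<le> b" using pV ab(1) by auto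
      then have "a \<bullet> z = b" using \<open>a \<bullet> p = b\<close> by linarith
      then show "z \<in> ?E" using z ab(2) by blast
    next
      assume z: "z \<in> ?E"
      then have "z \<in> V" "a \<bullet> z = b" using ab(2) by blast+
      then show "z \<in> V \<and> (\<forall>y \<in> V. a \<bullet> y \<le> a \<bullet> z)" using ab(1) by auto
    qed
    then show ?thesis using that False by blast
  next
    case True
    have "p \<in> ?E" by simp
    then have b0: "b = 0" using ab True by (auto split: if_splits)
    then have EV': "?E = V" using ab True by auto
    obtain i j where ij: "i \<in> {i. p $ i \<noteq> r $ i}" "j \<in> {i. p $ i \<noteq> r $ i}" "i \<noteq> j"
      by (rule two_diff[OF c2])
    define d where "d = r - p"
    define l where "l = (d $ j) *\<^sub>R axis i (1::real) - (d $ i) *\<^sub>R axis j 1"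
    have li: "l $ i = d $ j" using ij by (simp add: l_def axis_def)
    have l0: "l \<noteq> 0" using li ij d_def by auto
    have ld: "l \<bullet> r = l \<bullet> p"
    proof -
      have "l \<bullet> d = 0" by (simp add: l_def inner_diff_left inner_axis')
      then show ?thesis by (simp add: d_def inner_diff_right)
    qed
    have const: "l \<bullet> z = l \<bullet> p" if "z \<in> ?E" for z
    proof -
      from that obtain w where zw: "z = (1 - w) *\<^sub>R p + w *\<^sub>R r" unfolding closed_segment_def by blast
      show ?thesis unfolding zw using ld by (simp add: inner_add_right algebra_simps)
    qed
    have "(z \<in> V \<and> (\<forall>y \<in> V. l \<bullet> y \<le> l \<bullet> z)) \<longleftrightarrow> z \<in> ?E" for z
    proof
      assume "z \<in> V \<and> (\<forall>y \<in> V. l \<bullet> y \<le> l \<bullet> z)"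
      then show "z \<in> ?E" using EV' by simp
    next
      assume z: "z \<in> ?E"
      then have "z \<in> V" using EV' by simp
      moreover have "\<forall>y \<in> V. l \<bullet> y \<le> l \<bullet> z" using const z EV' by simp
      ultimately show "z \<in> V \<and> (\<forall>y \<in> V. l \<bullet> y \<le> l \<bullet> z)" by blast
    qed
    then show ?thesis using that l0 by blast
  qed
  have l2: "\<forall>z. (z \<in> V \<and> (\<forall>y \<in> V. l \<bullet> y \<le> l \<bullet> z)) \<longleftrightarrow> z \<in> {t *\<^sub>R p + (1 - t) *\<^sub>R r | t. t \<in> {0..1}}"
    using l(2) unfolding segment_eq[of p r] .
  show ?thesis
    using pr l(1) l2 c2 pV by blast
qed

theorem lemma3:
  fixes A :: "'n::finite \<Rightarrow> 'b set"
    and u :: "'n \<Rightarrow> ('n \<Rightarrow> 'b) \<Rightarrow> real"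
  assumes "CARD('n) \<ge> 2"
    and "\<And>i. finite (A i)"
    and "\<And>i. A i \<noteq> {}"
  shows "feasible_set A u \<noteq> Fstar A u \<longleftrightarrow>
    (\<exists>v \<in> feasible_set A u. \<exists>w \<in> feasible_set A u. v \<noteq> w \<and>
       (\<exists>l :: real ^ 'n. l \<noteq> 0 \<and>
          (\<forall>z :: real ^ 'n.
             (z \<in> feasible_set A u \<and> (\<forall>y \<in> feasible_set A u. l \<bullet> y \<le> l \<bullet> z))
             \<longleftrightarrow> z \<in> {t *\<^sub>R v + (1 - t) *\<^sub>R w | t. t \<in> {0..1}})) \<and>
       card {i. v $ i \<noteq> w $ i} \<ge> 2)"
proof -
  define PA where "PA = profiles A"
  have fPA: "finite PA" unfolding PA_def profiles_def using assms(2) by (simp add: finite_PiE)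
  have nePA: "PA \<noteq> {}" unfolding PA_def profiles_def using assms(3) by (simp add: PiE_eq_empty_iff)
  define P where "P = payoff_vec u ` PA"
  define V where "V = feasible_set A u"
  have V: "V = convex hull P" unfolding V_def P_def PA_def feasible_set_def by simp
  have fP: "finite P" using fPA P_def by simp
  have polyV: "polytope V" using V fP polytope_def by blast
  have compV: "compact V" using V fP finite_imp_compact_convex_hull by blast
  have convV: "convex V" using V by simp
  have neV: "V \<noteq> {}" using V nePA P_def by simp
  define mn where "mn i = Min (u i ` PA)" for i
  define mx where "mx i = Max (u i ` PA)" for i
  have F: "Fstar A u = {x. \<forall>i. mn i \<le> x $ i \<and> x $ i \<le> mx i}"
    unfolding Fstar_def mn_def mx_def PA_def by simp
  have coord: "payoff_vec u a $ i = u i a" for a i by (simp add: payoff_vec_def)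
  have PF: "P \<subseteq> Fstar A u"
    unfolding F P_def mn_def mx_def using fPA by (auto simp: coord)
  have convF: "convex (Fstar A u)"
    unfolding F convex_def
  proof (safe)
    fix x y :: "real ^ 'n" and a b :: real and i
    assume x: "\<forall>i. mn i \<le> x $ i \<and> x $ i \<le> mx i" and y: "\<forall>i. mn i \<le> y $ i \<and> y $ i \<le> mx i"
      and ab: "0 \<le> a" "0 \<le> b" "a + b = 1"
    have "a * mn i + b * mn i \<le> a * x $ i + b * y $ i"
      using x y ab by (simp add: add_mono mult_left_mono)
    then show "mn i \<le> (a *\<^sub>R x + b *\<^sub>R y) $ i" using ab by (simp add: distrib_right[symmetric])
    have "a * x $ i + b * y $ i \<le> a * mx i + b * mx i"
      using x y ab by (simp add: add_mono mult_left_mono)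
    then show "(a *\<^sub>R x + b *\<^sub>R y) $ i \<le> mx i" using ab by (simp add: distrib_right[symmetric])
  qed
  have VF: "V \<subseteq> Fstar A u" unfolding V using PF convF by (simp add: hull_minimal)
  have mixF: "(\<chi> k. if k = i then y $ k else x $ k) \<in> Fstar A u"
    if "x \<in> Fstar A u" "y \<in> Fstar A u" for x y :: "real ^ 'n" and i
  proof -
    have "\<forall>j. mn j \<le> x $ j \<and> x $ j \<le> mx j" "\<forall>j. mn j \<le> y $ j \<and> y $ j \<le> mx j"
      using that unfolding F by simp_all
    then show ?thesis unfolding F by simp
  qed
  show ?thesis
    unfolding V_def[symmetric]
  proof
    assume RHS: "\<exists>v \<in> V. \<exists>w \<in> V. v \<noteq> w \<and>
       (\<exists>l :: real ^ 'n. l \<noteq> 0 \<and>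
          (\<forall>z :: real ^ 'n.
             (z \<in> V \<and> (\<forall>y \<in> V. l \<bullet> y \<le> l \<bullet> z))
             \<longleftrightarrow> z \<in> {t *\<^sub>R v + (1 - t) *\<^sub>R w | t. t \<in> {0..1}})) \<and>
       card {i. v $ i \<noteq> w $ i} \<ge> 2"
    show "V \<noteq> Fstar A u"
    proof
      assume VeqF: "V = Fstar A u"
      from RHS obtain v w l where vw: "v \<in> V" "w \<in> V" and
        eq: "\<forall>z :: real ^ 'n.
             (z \<in> V \<and> (\<forall>y \<in> V. l \<bullet> y \<le> l \<bullet> z))
             \<longleftrightarrow> z \<in> {t *\<^sub>R v + (1 - t) *\<^sub>R w | t. t \<in> {0..1}}"
        and c2: "card {i. v $ i \<noteq> w $ i} \<ge> 2" by blast
      have mixV: "\<And>x y i. x \<in> V \<Longrightarrow> y \<in> V \<Longrightarrow> (\<chi> k. if k = i then y $ k else x $ k) \<in> V"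
        using mixF VeqF by simp
      show False
        by (rule no_diag_edge[of V v w l, OF mixV vw eq c2])
    qed
  next
    assume VneF: "V \<noteq> Fstar A u"
    show "\<exists>v \<in> V. \<exists>w \<in> V. v \<noteq> w \<and>
       (\<exists>l :: real ^ 'n. l \<noteq> 0 \<and>
          (\<forall>z :: real ^ 'n.
             (z \<in> V \<and> (\<forall>y \<in> V. l \<bullet> y \<le> l \<bullet> z))
             \<longleftrightarrow> z \<in> {t *\<^sub>R v + (1 - t) *\<^sub>R w | t. t \<in> {0..1}})) \<and>
       card {i. v $ i \<noteq> w $ i} \<ge> 2" (is ?R)
    proof (rule ccontr)
      assume nR: "\<not> ?R"
      have noedge: "\<not> card {i. p $ i \<noteq> r $ i} \<ge> 2"
        if "closed_segment p r face_of V" "p \<noteq> r" for p r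
        using edge_rhs[OF polyV that] nR by blast
      obtain x where x: "x \<in> Fstar A u" "x \<notin> V" using VF VneF by blast
      obtain a b where ab: "a \<bullet> x < b" "\<forall>y\<in>V. b < a \<bullet> y"
        using separating_hyperplane_closed_point[OF convV compact_imp_closed[OF compV] x(2)] by blast
      define s where "s i = (if a $ i \<le> 0 then 1 else - 1 :: real)" for i
      define c where "c = (\<chi> i. if a $ i \<le> 0 then mx i else mn i)"
      have "a \<bullet> c \<le> a \<bullet> x"
        unfolding inner_vec_def
      proof (rule sum_mono)
        fix i
        have "mn i \<le> x $ i" "x $ i \<le> mx i" using x(1) F by auto
        show "a $ i \<bullet> c $ i \<le> a $ i \<bullet> x $ i"
        proof (cases "a $ i \<le> 0")
          case True
          then have "c $ i = mx i" by (simp add: c_def)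
          then show ?thesis using True \<open>x $ i \<le> mx i\<close> by (simp add: mult_left_mono_neg)
        next
          case False
          then have "c $ i = mn i" by (simp add: c_def)
          then show ?thesis using False \<open>mn i \<le> x $ i\<close> by (simp add: mult_left_mono)
        qed
      qed
      then have cV: "c \<notin> V" using ab by force
      define \<Phi> where "\<Phi> y = (\<Sum>i\<in>UNIV. s i * y $ i)" for y :: "real ^ 'n"
      define X where "X = {p. p extreme_point_of V}"
      have XP: "X \<subseteq> P" unfolding X_def V using extreme_point_of_convex_hull by blast
      have fX: "finite X" using XP fP finite_subset by blast
      obtain e where "e extreme_point_of V" using extreme_point_exists_convex[OF compV convV neV] by blast
      then have neX: "X \<noteq> {}" unfolding X_def by blast
      have "Max (\<Phi> ` X) \<in> \<Phi> ` X" using fX neX by (intro Max_in) auto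
      then obtain p where pX: "p \<in> X" "\<Phi> p = Max (\<Phi> ` X)" by force
      have pmax: "\<Phi> y \<le> \<Phi> p" if "y \<in> X" for y using pX fX that by simp
      have pext: "p extreme_point_of V" using pX X_def by blast
      have pV: "p \<in> V" using pext extreme_point_of_def by blast
      have "p = c"
      proof (rule ccontr)
        assume "p \<noteq> c"
        then obtain i where i: "p $ i \<noteq> c $ i" by (metis vec_eq_iff)
        have pb: "mn i \<le> p $ i" "p $ i \<le> mx i" using pV VF F by auto
        have "mx i \<in> u i ` PA" "mn i \<in> u i ` PA"
          unfolding mn_def mx_def using fPA nePA by (intro Max_in Min_in; simp)+
        then have "c $ i \<in> u i ` PA" by (simp add: c_def)
        then obtain a0 where a0: "a0 \<in> PA" "u i a0 = c $ i" by (metis imageE)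
        have "payoff_vec u a0 \<in> P" using a0(1) unfolding P_def by (rule imageI)
        then have q: "payoff_vec u a0 \<in> V" "payoff_vec u a0 $ i = c $ i"
          unfolding V using a0(2) by (simp_all add: coord hull_inc)
        define m where "m = s i *\<^sub>R axis i (1::real)"
        have minner: "m \<bullet> y = s i * y $ i" for y by (simp add: m_def inner_axis' mult.commute)
        have "m \<bullet> payoff_vec u a0 > m \<bullet> p"
          unfolding minner q(2) using i pb by (auto simp: s_def c_def)
        then obtain r where r: "closed_segment p r face_of V" "m \<bullet> r > m \<bullet> p"
          using edge_exists[OF polyV pext q(1)] by blast
        have pr: "p \<noteq> r" using r by auto
        have ri: "r $ i \<noteq> p $ i" using r(2) minner by auto
        have rj: "r $ j = p $ j" if "j \<noteq> i" for j
        proof (rule ccontr)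
          assume "r $ j \<noteq> p $ j"
          then have "{i, j} \<subseteq> {k. p $ k \<noteq> r $ k}" using ri by auto
          then have "card {i, j} \<le> card {k. p $ k \<noteq> r $ k}" by (intro card_mono) auto
          then show False using noedge[OF r(1) pr] that by simp
        qed
        have "r extreme_point_of V"
          using extreme_point_of_face[OF r(1), of r] by (simp add: extreme_point_of_segment)
        then have "\<Phi> r \<le> \<Phi> p" using pmax X_def by blast
        moreover have "\<Phi> r - \<Phi> p = m \<bullet> r - m \<bullet> p"
        proof -
          have "\<Phi> r - \<Phi> p = (\<Sum>j\<in>UNIV. s j * r $ j - s j * p $ j)"
            unfolding \<Phi>_def by (simp add: sum_subtractf)
          also have "\<dots> = (\<Sum>j\<in>UNIV. if j = i then s i * r $ i - s i * p $ i else 0)"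
            by (rule sum.cong) (auto simp: rj)
          also have "\<dots> = m \<bullet> r - m \<bullet> p" by (simp add: minner)
          finally show ?thesis .
        qed
        ultimately show False using r(2) by simp
      qed
      then show False using pV cV by simp
    qed
  qed
qed

end
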